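(* Let $B_0,\ldots,B_N$, $T$, $\mathcal{F}$, $e$ be as in the context, let $\boldsymbol\lambda=(\lambda_1,\ldots,\lambda_m)$ be a stable non-resonant vector of eigenvalues with all $\lambda_i\ne0$, and let $C$ be a constant with $\|T(\boldsymbol\lambda^\alpha)^{-1}\|\le C|\boldsymbol\lambda^\alpha|^{-e}$ for all $|\alpha|\ge2$ (operator norm with respect to $\|\cdot\|_\infty$). Suppose $0<\mu\le\min\{|\lambda_1|^e,\ldots,|\lambda_m|^e\}$. Define $K$ on $H$ by $K\varphi=\sum_{|\alpha|\ge2}z^\alpha T(\boldsymbol\lambda^\alpha)^{-1}\varphi_\alpha$ for $\varphi=\sum_{|\alpha|\ge2}z^\alpha\varphi_\alpha$. Then $K$ is a bounded linear operator $H\to H(\mu)$ which inverts $D\Phi(0)$ (i.e. $\sum_{i=0}^NB_i(K\varphi)(\Lambda^iz)=\varphi(z)$ for $\|z\|_\infty\le\mu$, with $\Lambda=\mathrm{diag}(\lambda_1,\ldots,\lambda_m)$), and the composition $\Delta_\mu K:H\to H$ is bounded with $\|\Delta_\mu K\|\le C$.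
   Context: $T(\lambda)=\sum_{i=0}^N\lambda^iB_i$, $\mathcal{F}(\lambda)=\det T(\lambda)=\lambda^eg(\lambda)$ with $g(0)\neq0$ ($e$ maximal). A vector $\boldsymbol\lambda\in\mathbb{C}^m$ is a stable non-resonant vector of eigenvalues if $|\lambda_i|<1$, $\mathcal{F}(\lambda_i)=0$, and $\mathcal{F}(\boldsymbol\lambda^\alpha)\ne0$ for all $|\alpha|\ge2$; $\boldsymbol\lambda^\alpha=\prod\lambda_i^{\alpha_i}$. Sup norm $\|\cdot\|_\infty$ on $\mathbb{C}^s$. For $\mu>0$, $H(\mu)$ is the Banach space of functions $P(z)=\sum_{k\ge2}\sum_{|\alpha|=k}z^\alpha P_\alpha$ on $\{z\in\mathbb{C}^m:\|z\|_\infty\le\mu\}$ with values in $\mathbb{C}^d$ and norm $\|P\|_\mu=\sum_{k\ge2}\sum_{|\alpha|=k}\mu^k\|P_\alpha\|_\infty<\infty$; $H=H(1)$ with norm $\|\cdot\|_1$. $\Delta_\mu:H(\mu)\to H$ is $\Delta_\mu[\varphi](z)=\varphi(\mu z)$. $D\Phi(0)$ is the linear operator $\varphi\mapsto\sum_{i=0}^NB_i\,\varphi\circ\Lambda^i$. *)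

theory Defs
  imports "HOL-Analysis.Analysis" "HOL-Computational_Algebra.Polynomial"
begin

definition supnorm :: "complex^'s \<Rightarrow> real" where
  "supnorm v = Max (range (\<lambda>i. norm (v $ i)))"

definition opnorm_inf :: "complex^'s^'s \<Rightarrow> real" where
  "opnorm_inf A = Sup {supnorm (A *v x) | x. supnorm x \<le> 1}"

definition Tpoly :: "nat \<Rightarrow> (nat \<Rightarrow> complex^'d^'d) \<Rightarrow> complex \<Rightarrow> complex^'d^'d" where
  "Tpoly N B x = (\<chi> i j. \<Sum>k\<le>N. x ^ k * (B k $ i $ j))"

definition mdeg :: "('m::finite \<Rightarrow> nat) \<Rightarrow> nat" where
  "mdeg \<alpha> = (\<Sum>j\<in>UNIV. \<alpha> j)"

definition mpow :: "complex^'m \<Rightarrow> ('m::finite \<Rightarrow> nat) \<Rightarrow> complex" where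
  "mpow z \<alpha> = (\<Prod>j\<in>UNIV. (z $ j) ^ (\<alpha> j))"

text \<open>Elements of H(mu) are represented by their coefficient families
  P = sum_{|alpha|>=2} z^alpha P_alpha.\<close>
definition inH :: "real \<Rightarrow> (('m::finite \<Rightarrow> nat) \<Rightarrow> complex^'d) \<Rightarrow> bool" where
  "inH \<mu> P \<longleftrightarrow> (\<forall>\<alpha>. mdeg \<alpha> < 2 \<longrightarrow> P \<alpha> = 0) \<and>
      (\<lambda>\<alpha>. \<mu> ^ mdeg \<alpha> * supnorm (P \<alpha>)) summable_on UNIV"

definition normH :: "real \<Rightarrow> (('m::finite \<Rightarrow> nat) \<Rightarrow> complex^'d) \<Rightarrow> real" where
  "normH \<mu> P = (\<Sum>\<^sub>\<infinity>\<alpha>. \<mu> ^ mdeg \<alpha> * supnorm (P \<alpha>))"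

definition evalH :: "(('m::finite \<Rightarrow> nat) \<Rightarrow> complex^'d) \<Rightarrow> complex^'m \<Rightarrow> complex^'d" where
  "evalH P z = (\<Sum>\<^sub>\<infinity>\<alpha>. mpow z \<alpha> *s P \<alpha>)"

text \<open>Delta_mu[phi](z) = phi(mu z), on coefficients: P_alpha |-> mu^|alpha| P_alpha.\<close>
definition DeltaH :: "real \<Rightarrow> (('m::finite \<Rightarrow> nat) \<Rightarrow> complex^'d) \<Rightarrow> (('m \<Rightarrow> nat) \<Rightarrow> complex^'d)" where
  "DeltaH \<mu> P = (\<lambda>\<alpha>. (complex_of_real \<mu>) ^ mdeg \<alpha> *s P \<alpha>)"

definition Kop :: "nat \<Rightarrow> (nat \<Rightarrow> complex^'d^'d) \<Rightarrow> complex^'m \<Rightarrow>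
    (('m::finite \<Rightarrow> nat) \<Rightarrow> complex^'d) \<Rightarrow> (('m \<Rightarrow> nat) \<Rightarrow> complex^'d)" where
  "Kop N B lam \<phi> = (\<lambda>\<alpha>. if mdeg \<alpha> \<ge> 2 then matrix_inv (Tpoly N B (mpow lam \<alpha>)) *v \<phi> \<alpha> else 0)"

definition diagpow :: "complex^'m \<Rightarrow> nat \<Rightarrow> complex^'m \<Rightarrow> complex^'m" where
  "diagpow lam i z = (\<chi> j. (lam $ j) ^ i * z $ j)"

end

theory Submission
  imports Defs
begin


lemma supnorm_ge: "norm (v $ i) \<le> supnorm v"
  unfolding supnorm_def by (rule Max_ge) auto

lemma supnorm_nonneg: "0 \<le> supnorm v"
  using supnorm_ge[of v] norm_ge_zero order_trans by blast

lemma supnorm_le: "(\<And>i. norm (v $ i) \<le> c) \<Longrightarrow> supnorm v \<le> c"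
  unfolding supnorm_def by (subst Max_le_iff) auto

lemma supnorm_zero[simp]: "supnorm 0 = 0"
  by (metis antisym supnorm_le supnorm_nonneg norm_zero zero_index order_refl)

lemma supnorm_scale: "supnorm (c *s v) = cmod c * supnorm v"
proof (rule antisym)
  show "supnorm (c *s v) \<le> cmod c * supnorm v"
    by (rule supnorm_le) (simp add: norm_mult mult_left_mono supnorm_ge)
  have "supnorm v \<in> range (\<lambda>i. norm (v $ i))" unfolding supnorm_def by (rule Max_in) auto
  then obtain i where i: "supnorm v = norm (v $ i)" by auto
  show "cmod c * supnorm v \<le> supnorm (c *s v)"
    using supnorm_ge[of "c *s v" i] by (simp add: i norm_mult)
qed

lemma norm_le_supnorm: "norm (v::complex^'d) \<le> of_nat CARD('d) * supnorm v"
proof -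
  have "norm v \<le> (\<Sum>i\<in>UNIV. norm (v $ i))"
    by (simp add: norm_vec_def L2_set_le_sum)
  also have "\<dots> \<le> (\<Sum>i\<in>(UNIV::'d set). supnorm v)"
    by (rule sum_mono) (rule supnorm_ge)
  finally show ?thesis by simp
qed

lemma matvec_bound: "supnorm ((A::complex^'d^'d) *v x) \<le> (\<Sum>i\<in>UNIV. \<Sum>j\<in>UNIV. norm (A$i$j)) * supnorm x"
proof (rule supnorm_le)
  fix i
  have "norm ((A *v x) $ i) = norm (\<Sum>j\<in>UNIV. A$i$j * x$j)"
    by (simp add: matrix_vector_mult_def)
  also have "\<dots> \<le> (\<Sum>j\<in>UNIV. norm (A$i$j) * supnorm x)"
    by (rule order_trans[OF norm_sum], rule sum_mono)
       (simp add: norm_mult mult_left_mono supnorm_ge)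
  also have "\<dots> \<le> (\<Sum>i\<in>UNIV. \<Sum>j\<in>UNIV. norm (A$i$j)) * supnorm x"
    unfolding sum_distrib_right[symmetric]
    by (rule mult_right_mono[OF _ supnorm_nonneg])
       (rule member_le_sum[of i UNIV "\<lambda>i. \<Sum>j\<in>UNIV. norm (A$i$j)"], auto intro: sum_nonneg)
  finally show "norm ((A *v x) $ i) \<le> \<dots>" .
qed

lemma opnorm_bdd: "bdd_above {supnorm ((A::complex^'d^'d) *v x) | x. supnorm x \<le> 1}"
  unfolding bdd_above_def
proof (intro exI[of _ "\<Sum>i\<in>UNIV. \<Sum>j\<in>UNIV. norm (A$i$j)"] ballI)
  fix y assume "y \<in> {supnorm (A *v x) | x. supnorm x \<le> 1}"
  then obtain x where y: "y = supnorm (A *v x)" and x: "supnorm x \<le> 1" by auto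
  have "y \<le> (\<Sum>i\<in>UNIV. \<Sum>j\<in>UNIV. norm (A$i$j)) * supnorm x" using y matvec_bound by simp
  also have "\<dots> \<le> (\<Sum>i\<in>UNIV. \<Sum>j\<in>UNIV. norm (A$i$j))"
    using x supnorm_nonneg[of x] by (simp add: mult_left_le sum_nonneg)
  finally show "y \<le> (\<Sum>i\<in>UNIV. \<Sum>j\<in>UNIV. norm (A$i$j))" .
qed

lemma opnorm_ge: "supnorm x \<le> 1 \<Longrightarrow> supnorm ((A::complex^'d^'d) *v x) \<le> opnorm_inf A"
  unfolding opnorm_inf_def by (rule cSup_upper[OF _ opnorm_bdd]) auto

lemma opnorm_nonneg: "0 \<le> opnorm_inf (A::complex^'d^'d)"
  using opnorm_ge[of 0 A] by simp

lemma opnorm_apply: "supnorm ((A::complex^'d^'d) *v x) \<le> opnorm_inf A * supnorm x"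
proof (cases "supnorm x = 0")
  case True
  then have "x = 0" using supnorm_ge[of x]
    by (metis norm_le_zero_iff vec_eq_iff zero_index)
  then show ?thesis by simp
next
  case False
  then have s: "supnorm x > 0" using supnorm_nonneg[of x] by simp
  define y where "y = complex_of_real (1 / supnorm x) *s x"
  have "supnorm y = 1" using s by (simp add: y_def supnorm_scale norm_divide)
  then have "supnorm (A *v y) \<le> opnorm_inf A" by (intro opnorm_ge) simp
  moreover have "supnorm (A *v y) = supnorm (A *v x) / supnorm x"
    using s by (simp add: y_def vector_scalar_commute supnorm_scale norm_divide)
  ultimately show ?thesis using s by (simp add: divide_le_eq mult.commute)
qed

lemma matrix_inv_apply:
  assumes "det (A::complex^'d^'d) \<noteq> 0" shows "A *v (matrix_inv A *v v) = v"
proof -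
  have "invertible A" using assms invertible_det_nz by blast
  then have "A ** matrix_inv A = mat 1"
    unfolding matrix_inv_def invertible_def by (rule someI2_ex) auto
  then show ?thesis by (simp add: matrix_vector_mul_assoc)
qed

lemma Tpoly_apply: "Tpoly N B c *v v = (\<Sum>k\<le>N. c ^ k *s (B k *v v))"
  by (simp add: vec_eq_iff Tpoly_def matrix_vector_mult_def sum_component sum_distrib_left sum_distrib_right
      mult_ac sum.swap[of _ "{..N}"])

lemma mpow_norm: "cmod (mpow z \<alpha>) = (\<Prod>j\<in>UNIV. cmod (z $ j) ^ \<alpha> j)"
  by (simp add: mpow_def prod_norm[symmetric] norm_power)

lemma mpow_diagpow: "mpow (diagpow lam i z) \<alpha> = (mpow lam \<alpha>) ^ i * mpow z \<alpha>"
  by (simp add: mpow_def diagpow_def power_mult_distrib prod.distrib prod_power_distrib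
      power_mult[symmetric] mult.commute)

lemma mpow_le: assumes "supnorm z \<le> \<mu>" shows "cmod (mpow z \<alpha>) \<le> \<mu> ^ mdeg \<alpha>"
proof -
  have "cmod (mpow z \<alpha>) \<le> (\<Prod>j\<in>UNIV. \<mu> ^ \<alpha> j)"
    unfolding mpow_norm
    by (rule prod_mono) (use supnorm_ge[of z] assms in \<open>auto intro!: power_mono intro: order_trans\<close>)
  also have "\<dots> = \<mu> ^ mdeg \<alpha>" by (simp add: mdeg_def power_sum)
  finally show ?thesis .
qed

lemma mu_le_mpow: assumes "\<forall>j. \<mu> \<le> cmod (lam $ j) ^ e" "0 \<le> \<mu>"
  shows "\<mu> ^ mdeg \<alpha> \<le> cmod (mpow lam \<alpha>) ^ e"
proof -
  have "\<mu> ^ mdeg \<alpha> = (\<Prod>j\<in>UNIV. \<mu> ^ \<alpha> j)" by (simp add: mdeg_def power_sum)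
  also have "\<dots> \<le> (\<Prod>j\<in>UNIV. (cmod (lam $ j) ^ e) ^ \<alpha> j)"
    by (rule prod_mono) (use assms in \<open>auto intro: power_mono\<close>)
  also have "\<dots> = cmod (mpow lam \<alpha>) ^ e"
    by (simp add: mpow_norm prod_power_distrib power_mult[symmetric] mult.commute)
  finally show ?thesis .
qed

lemma mpow_le1: assumes "\<forall>j. cmod (lam $ j) < 1" shows "cmod (mpow lam \<alpha>) \<le> 1"
  unfolding mpow_norm
proof (intro prod_le_1 conjI)
  fix x show "0 \<le> cmod (lam $ x) ^ \<alpha> x" by simp
  show "cmod (lam $ x) ^ \<alpha> x \<le> 1" using assms by (intro power_le_one) (auto simp: less_imp_le)
qed

lemma mpow_pos: assumes "\<forall>j. lam $ j \<noteq> 0" shows "cmod (mpow lam \<alpha>) > 0"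
  unfolding mpow_norm using assms by (intro prod_pos) auto

lemma powi_neg: "(r::real) > 0 \<Longrightarrow> r powi (- int e) = 1 / r ^ e"
  by (simp add: power_int_minus divide_inverse)

lemma has_sum_finite_sum:
  fixes f :: "'i \<Rightarrow> 'a \<Rightarrow> 'b::{topological_comm_monoid_add}"
  assumes "finite I" "\<And>i. i \<in> I \<Longrightarrow> (f i has_sum S i) A"
  shows "((\<lambda>x. \<Sum>i\<in>I. f i x) has_sum (\<Sum>i\<in>I. S i)) A"
  using assms
proof (induction I rule: finite_induct)
  case empty then show ?case by simp
next
  case (insert j I)
  then show ?case by (simp add: has_sum_add)
qed

lemma norm_smult_vec: "norm (c *s (v::complex^'d)) = cmod c * norm v"
  unfolding norm_vec_def by (simp add: norm_mult L2_set_right_distrib)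

lemma matvec_bl: "bounded_linear (\<lambda>x. (M::complex^'d^'d) *v x)"
  by (simp add: linear_conv_bounded_linear)

lemma sum_scal: "(\<Sum>i\<le>N. B i *v ((p^i * q) *s w)) = q *s (\<Sum>i\<le>N. p^i *s ((B i::complex^'d^'d) *v w))"
  by (simp add: vec_eq_iff vector_scalar_commute sum_component sum_distrib_left mult_ac)


theorem mainTheorem11:
  fixes N :: nat and B :: "nat \<Rightarrow> complex^'d^'d" and e :: nat and g :: "complex poly"
    and lam :: "complex^'m::finite" and C :: real and \<mu> :: real
  assumes detT: "\<forall>x. det (Tpoly N B x) = x ^ e * poly g x"
    and g0: "poly g 0 \<noteq> 0"
    and stable: "\<forall>j. cmod (lam $ j) < 1"
    and eig: "\<forall>j. det (Tpoly N B (lam $ j)) = 0"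
    and nonres: "\<forall>\<alpha>. mdeg \<alpha> \<ge> 2 \<longrightarrow> det (Tpoly N B (mpow lam \<alpha>)) \<noteq> 0"
    and nonzero: "\<forall>j. lam $ j \<noteq> 0"
    and Cbound: "\<forall>\<alpha>. mdeg \<alpha> \<ge> 2 \<longrightarrow>
        opnorm_inf (matrix_inv (Tpoly N B (mpow lam \<alpha>))) \<le> C * cmod (mpow lam \<alpha>) powi (- int e)"
    and mu_pos: "0 < \<mu>"
    and mu_le: "\<forall>j. \<mu> \<le> cmod (lam $ j) ^ e"
  shows "(\<forall>\<phi> \<psi>. Kop N B lam (\<lambda>\<alpha>. \<phi> \<alpha> + \<psi> \<alpha>) = (\<lambda>\<alpha>. Kop N B lam \<phi> \<alpha> + Kop N B lam \<psi> \<alpha>))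
    \<and> (\<forall>(c::complex) \<phi>. Kop N B lam (\<lambda>\<alpha>. c *s \<phi> \<alpha>) = (\<lambda>\<alpha>. c *s Kop N B lam \<phi> \<alpha>))
    \<and> (\<exists>M. \<forall>\<phi>. inH 1 \<phi> \<longrightarrow> inH \<mu> (Kop N B lam \<phi>) \<and> normH \<mu> (Kop N B lam \<phi>) \<le> M * normH 1 \<phi>)
    \<and> (\<forall>\<phi>. inH 1 \<phi> \<longrightarrow> (\<forall>z. supnorm z \<le> \<mu> \<longrightarrow>
          (\<Sum>i\<le>N. B i *v evalH (Kop N B lam \<phi>) (diagpow lam i z)) = evalH \<phi> z))
    \<and> (\<forall>\<phi>. inH 1 \<phi> \<longrightarrow> inH 1 (DeltaH \<mu> (Kop N B lam \<phi>)) \<and>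
          normH 1 (DeltaH \<mu> (Kop N B lam \<phi>)) \<le> C * normH 1 \<phi>)"
  proof -
  let ?K = "Kop N B lam"
  have C0: "0 \<le> C"
  proof -
    define a0 :: "'m \<Rightarrow> nat" where "a0 = (\<lambda>j. 2)"
    have "mdeg a0 = 2 * CARD('m)" by (simp add: mdeg_def a0_def)
    then have "mdeg a0 \<ge> 2" by simp
    then have "opnorm_inf (matrix_inv (Tpoly N B (mpow lam a0))) \<le> C * cmod (mpow lam a0) powi (- int e)"
      using Cbound by blast
    moreover have "cmod (mpow lam a0) powi (- int e) > 0" using mpow_pos[OF nonzero] by simp
    ultimately show ?thesis using opnorm_nonneg[of "matrix_inv (Tpoly N B (mpow lam a0))"]
      by (metis dual_order.trans zero_le_mult_iff not_le)
  qed
  have Kzero: "mdeg \<alpha> < 2 \<Longrightarrow> ?K \<phi> \<alpha> = 0" for \<phi> \<alpha> by (simp add: Kop_def)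
  have key: "\<mu> ^ mdeg \<alpha> * supnorm (?K \<phi> \<alpha>) \<le> C * supnorm (\<phi> \<alpha>)" for \<phi> \<alpha>
  proof (cases "mdeg \<alpha> \<ge> 2")
    case False
    then show ?thesis using Kzero[of \<alpha> \<phi>] C0 supnorm_nonneg[of "\<phi> \<alpha>"] by simp
  next
    case True
    define r where "r = cmod (mpow lam \<alpha>)"
    define A where "A = matrix_inv (Tpoly N B (mpow lam \<alpha>))"
    have r0: "r > 0" unfolding r_def using mpow_pos[OF nonzero] .
    have mr: "\<mu> ^ mdeg \<alpha> \<le> r ^ e" unfolding r_def using mu_le_mpow[OF mu_le] mu_pos by simp
    have "supnorm (?K \<phi> \<alpha>) = supnorm (A *v \<phi> \<alpha>)" using True by (simp add: Kop_def A_def)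
    also have "\<dots> \<le> opnorm_inf A * supnorm (\<phi> \<alpha>)" by (rule opnorm_apply)
    also have "\<dots> \<le> (C / r ^ e) * supnorm (\<phi> \<alpha>)"
      using Cbound True supnorm_nonneg[of "\<phi> \<alpha>"] powi_neg[OF r0, of e]
      by (intro mult_right_mono) (auto simp: A_def r_def)
    finally have 1: "supnorm (?K \<phi> \<alpha>) \<le> C / r ^ e * supnorm (\<phi> \<alpha>)" .
    have "\<mu> ^ mdeg \<alpha> * supnorm (?K \<phi> \<alpha>) \<le> r ^ e * (C / r ^ e * supnorm (\<phi> \<alpha>))"
      using mr 1 mu_pos r0 supnorm_nonneg[of "?K \<phi> \<alpha>"]
      by (intro mult_mono) (auto intro: order_trans)
    also have "\<dots> = C * supnorm (\<phi> \<alpha>)" using r0 by simp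
    finally show ?thesis .
  qed
  have sum1: "(\<lambda>\<alpha>. supnorm (\<phi> \<alpha>)) summable_on UNIV" if "inH 1 \<phi>" for \<phi> :: "('m \<Rightarrow> nat) \<Rightarrow> complex^'d"
    using that by (simp add: inH_def)
  have bnd: "(\<lambda>\<alpha>. \<mu> ^ mdeg \<alpha> * supnorm (?K \<phi> \<alpha>)) summable_on UNIV \<and>
      (\<Sum>\<^sub>\<infinity>\<alpha>. \<mu> ^ mdeg \<alpha> * supnorm (?K \<phi> \<alpha>)) \<le> C * normH 1 \<phi>" if "inH 1 \<phi>" for \<phi>
  proof
    have s: "(\<lambda>\<alpha>. C * supnorm (\<phi> \<alpha>)) summable_on UNIV"
      using sum1[OF that] by (rule summable_on_cmult_right)
    show sK: "(\<lambda>\<alpha>. \<mu> ^ mdeg \<alpha> * supnorm (?K \<phi> \<alpha>)) summable_on UNIV"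
      by (rule summable_on_comparison_test[OF s]) (use key mu_pos supnorm_nonneg in \<open>auto intro!: mult_nonneg_nonneg\<close>)
    have "(\<Sum>\<^sub>\<infinity>\<alpha>. \<mu> ^ mdeg \<alpha> * supnorm (?K \<phi> \<alpha>)) \<le> (\<Sum>\<^sub>\<infinity>\<alpha>. C * supnorm (\<phi> \<alpha>))"
      by (rule infsum_mono[OF sK s key])
    also have "\<dots> = C * normH 1 \<phi>" by (simp add: normH_def infsum_cmult_right')
    finally show "(\<Sum>\<^sub>\<infinity>\<alpha>. \<mu> ^ mdeg \<alpha> * supnorm (?K \<phi> \<alpha>)) \<le> C * normH 1 \<phi>" .
  qed
  have P12: "(\<forall>\<phi> \<psi>. ?K (\<lambda>\<alpha>. \<phi> \<alpha> + \<psi> \<alpha>) = (\<lambda>\<alpha>. ?K \<phi> \<alpha> + ?K \<psi> \<alpha>))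
    \<and> (\<forall>(c::complex) \<phi>. ?K (\<lambda>\<alpha>. c *s \<phi> \<alpha>) = (\<lambda>\<alpha>. c *s ?K \<phi> \<alpha>))"
    by (auto simp: Kop_def fun_eq_iff matrix_vector_right_distrib vector_scalar_commute)
  have P3: "\<exists>M. \<forall>\<phi>. inH 1 \<phi> \<longrightarrow> inH \<mu> (?K \<phi>) \<and> normH \<mu> (?K \<phi>) \<le> M * normH 1 \<phi>"
    using bnd Kzero by (intro exI[of _ C]) (auto simp: inH_def normH_def)
  have Dnorm: "1 ^ mdeg \<alpha> * supnorm (DeltaH \<mu> (?K \<phi>) \<alpha>) = \<mu> ^ mdeg \<alpha> * supnorm (?K \<phi> \<alpha>)" for \<phi> \<alpha>
    using mu_pos by (simp add: DeltaH_def supnorm_scale norm_power)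
  have P5: "\<forall>\<phi>. inH 1 \<phi> \<longrightarrow> inH 1 (DeltaH \<mu> (?K \<phi>)) \<and>
          normH 1 (DeltaH \<mu> (?K \<phi>)) \<le> C * normH 1 \<phi>"
    using bnd Kzero unfolding Dnorm inH_def normH_def by (auto simp: DeltaH_def)
  have P4: "\<forall>\<phi>. inH 1 \<phi> \<longrightarrow> (\<forall>z. supnorm z \<le> \<mu> \<longrightarrow>
          (\<Sum>i\<le>N. B i *v evalH (?K \<phi>) (diagpow lam i z)) = evalH \<phi> z)"
  proof (intro allI impI)
    fix \<phi> :: "('m \<Rightarrow> nat) \<Rightarrow> complex^'d" and z :: "complex^'m"
    assume H: "inH 1 \<phi>" and z: "supnorm z \<le> \<mu>"
    define \<psi> where "\<psi> = ?K \<phi>"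
    define f where "f i \<alpha> = mpow (diagpow lam i z) \<alpha> *s \<psi> \<alpha>" for i \<alpha>
    have fsum: "f i summable_on UNIV" for i
    proof (rule abs_summable_summable)
      have s: "(\<lambda>\<alpha>. of_nat CARD('d) * (C * supnorm (\<phi> \<alpha>))) summable_on UNIV"
        by (intro summable_on_cmult_right sum1[OF H])
      show "(\<lambda>\<alpha>. norm (f i \<alpha>)) summable_on UNIV"
      proof (rule summable_on_comparison_test[OF s])
        fix \<alpha>
        have "norm (f i \<alpha>) = cmod (mpow lam \<alpha>) ^ i * cmod (mpow z \<alpha>) * norm (\<psi> \<alpha>)"
          by (simp add: f_def mpow_diagpow norm_mult norm_power norm_smult_vec)
        also have "\<dots> \<le> 1 * \<mu> ^ mdeg \<alpha> * (of_nat CARD('d) * supnorm (\<psi> \<alpha>))"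
          using mu_pos mpow_le1[OF stable, of \<alpha>] mpow_le[OF z, of \<alpha>] norm_le_supnorm[of "\<psi> \<alpha>"]
          by (intro mult_mono) (auto intro: power_le_one)
        also have "\<dots> \<le> of_nat CARD('d) * (C * supnorm (\<phi> \<alpha>))"
          using key[of \<alpha> \<phi>] by (simp add: \<psi>_def mult_ac)
        finally show "norm (f i \<alpha>) \<le> of_nat CARD('d) * (C * supnorm (\<phi> \<alpha>))" .
      qed simp
    qed
    have hs: "((\<lambda>\<alpha>. B i *v f i \<alpha>) has_sum (B i *v evalH \<psi> (diagpow lam i z))) UNIV" for i
      using has_sum_bounded_linear[OF matvec_bl[of "B i"], OF fsum[of i, unfolded summable_iff_has_sum_infsum]]
      by (simp add: evalH_def f_def[abs_def])
    have "((\<lambda>\<alpha>. \<Sum>i\<le>N. B i *v f i \<alpha>) has_sum (\<Sum>i\<le>N. B i *v evalH \<psi> (diagpow lam i z))) UNIV"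
      by (rule has_sum_finite_sum) (auto intro: hs)
    moreover have "(\<Sum>i\<le>N. B i *v f i \<alpha>) = mpow z \<alpha> *s \<phi> \<alpha>" for \<alpha>
    proof (cases "mdeg \<alpha> \<ge> 2")
      case False
      then have "\<phi> \<alpha> = 0" "\<psi> \<alpha> = 0" using H Kzero by (auto simp: inH_def \<psi>_def)
      then show ?thesis by (simp add: f_def)
    next
      case True
      have "(\<Sum>i\<le>N. B i *v f i \<alpha>) = mpow z \<alpha> *s (\<Sum>i\<le>N. mpow lam \<alpha> ^ i *s (B i *v \<psi> \<alpha>))"
        unfolding f_def mpow_diagpow by (rule sum_scal)
      also have "\<dots> = mpow z \<alpha> *s (Tpoly N B (mpow lam \<alpha>) *v \<psi> \<alpha>)" by (simp add: Tpoly_apply)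
      also have "\<dots> = mpow z \<alpha> *s \<phi> \<alpha>"
        using True nonres by (simp add: \<psi>_def Kop_def matrix_inv_apply)
      finally show ?thesis .
    qed
    ultimately have "((\<lambda>\<alpha>. mpow z \<alpha> *s \<phi> \<alpha>) has_sum (\<Sum>i\<le>N. B i *v evalH \<psi> (diagpow lam i z))) UNIV"
      by simp
    then show "(\<Sum>i\<le>N. B i *v evalH (?K \<phi>) (diagpow lam i z)) = evalH \<phi> z"
      unfolding evalH_def \<psi>_def by (simp add: infsumI)
  qed
  show ?thesis using P12 P3 P4 P5 by blast
qed

end
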